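(* Fix integers $w\ge1$ and $m\ge0$. Let $\phi:W\to W$ be a linear map with $\phi(b^i_j)=\lambda^b_jb^i_{j+w}$, $\phi(c^i_j)=\mu^c_jc^i_{j+w}$, $\phi(\beta^i_j)=\lambda^\beta_j\beta^i_{j+w}$, $\phi(\gamma^i_j)=\mu^\gamma_j\gamma^i_{j+w}$ for all $i=1,\dots,n$ and $j\ge0$, where the constants $\lambda^b_j,\mu^c_j,\lambda^\beta_j,\mu^\gamma_j\in\mathbb C$ do not depend on $i$. Then the restriction $\phi|_{W_m}$ can be expressed uniquely as a linear combination of the operators $j^{0,k}(k-w)|_{W_m}$ and $j^{1,k}(k-w)|_{W_m}$ with $0\le k-w\le 2m+1$.
   Context: Let $\mathcal F$ be the rank $n$ $bc\beta\gamma$-system: the vertex superalgebra with even generators $\beta^i,\gamma^i$ and odd generators $b^i,c^i$ ($1\le i\le n$), with nonregular OPEs $\beta^i(z)\gamma^j(w)\sim\delta_{ij}(z-w)^{-1}$, $\gamma^i(z)\beta^j(w)\sim-\delta_{ij}(z-w)^{-1}$, $b^i(z)c^j(w)\sim\delta_{ij}(z-w)^{-1}$, $c^i(z)b^j(w)\sim\delta_{ij}(z-w)^{-1}$. Filter $\mathcal F$ by letting $\mathcal F_{(d)}$ be the span of iterated Wick products of the generators and their derivatives of length at most $d$. The associated graded $\mathrm{gr}(\mathcal F)$ is the free supercommutative algebra on even variables $\beta^i_j,\gamma^i_j$ and odd variables $b^i_j,c^i_j$ ($1\le i\le n$, $j\ge0$), the images of $\partial^j\beta^i,\partial^j\gamma^i,\partial^jb^i,\partial^jc^i$.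 Let $W\subset\mathrm{gr}(\mathcal F)$ be the span of all $b^i_j,c^i_j,\beta^i_j,\gamma^i_j$ ($j\ge0$) and $W_m$ the span of those with $j\le m$. For an element $\omega\in\mathcal F_{(2)}$ and $r\ge0$, the operator $\omega\circ_r$ induces a derivation of degree $0$ on $\mathrm{gr}(\mathcal F)$, denoted $\omega(r)$. Set $j^{0,k}=-\sum_{i=1}^n:b^i\partial^kc^i:$ and $j^{1,k}=\sum_{i=1}^n:\beta^i\partial^k\gamma^i:$; for $k-w\ge0$ the derivations $j^{0,k}(k-w)$ and $j^{1,k}(k-w)$ map $W$ into $W$. *)

theory Defs
  imports Complex_Main
begin

text \<open>Generators of gr(F) of degree one: type (b, c, beta, gamma), colour index i, derivative order j.\<close>
datatype gen = Gb | Gc | Gbeta | Ggamma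

type_synonym idx = "gen \<times> nat \<times> nat"
type_synonym vec = "idx \<Rightarrow> complex"

definition valid_idx :: "nat \<Rightarrow> idx \<Rightarrow> bool" where
  "valid_idx n x = (case x of (g, i, j) \<Rightarrow> 1 \<le> i \<and> i \<le> n)"

definition Wsp :: "nat \<Rightarrow> vec set" where
  "Wsp n = {v. finite {x. v x \<noteq> 0} \<and> (\<forall>x. v x \<noteq> 0 \<longrightarrow> valid_idx n x)}"

definition Wm :: "nat \<Rightarrow> nat \<Rightarrow> vec set" where
  "Wm n m = {v \<in> Wsp n. \<forall>g i j. v (g, i, j) \<noteq> 0 \<longrightarrow> j \<le> m}"

definition bas :: "idx \<Rightarrow> vec" where
  "bas x = (\<lambda>y. if y = x then 1 else 0)"

definition lin_ext :: "(idx \<Rightarrow> vec) \<Rightarrow> vec \<Rightarrow> vec" where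
  "lin_ext f v = (\<lambda>y. \<Sum>x\<in>{x. v x \<noteq> 0}. v x * f x y)"

text \<open>Action of omega(r) on generators, computed from the OPEs, for
  omega = j^{0,k} = - sum_i :b^i d^k c^i: and omega = j^{1,k} = sum_i :beta^i d^k gamma^i:.\<close>
definition coef_lower :: "nat \<Rightarrow> nat \<Rightarrow> nat \<Rightarrow> complex" where
  "coef_lower k r j = (if r \<le> j then of_nat (fact j) / of_nat (fact (j - r)) else 0)"

definition coef_upper :: "nat \<Rightarrow> nat \<Rightarrow> nat \<Rightarrow> complex" where
  "coef_upper k r j = (if r \<le> k + j then (-1) ^ (k + 1) * of_nat (fact (k + j)) / of_nat (fact (k + j - r)) else 0)"

definition J0 :: "nat \<Rightarrow> nat \<Rightarrow> idx \<Rightarrow> vec" where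
  "J0 k r x = (case x of
      (Gb, i, j) \<Rightarrow> (\<lambda>y. coef_upper k r j * bas (Gb, i, k + j - r) y)
    | (Gc, i, j) \<Rightarrow> (\<lambda>y. coef_lower k r j * bas (Gc, i, j + k - r) y)
    | _ \<Rightarrow> (\<lambda>y. 0))"

definition J1 :: "nat \<Rightarrow> nat \<Rightarrow> idx \<Rightarrow> vec" where
  "J1 k r x = (case x of
      (Gbeta, i, j) \<Rightarrow> (\<lambda>y. coef_upper k r j * bas (Gbeta, i, k + j - r) y)
    | (Ggamma, i, j) \<Rightarrow> (\<lambda>y. coef_lower k r j * bas (Ggamma, i, j + k - r) y)
    | _ \<Rightarrow> (\<lambda>y. 0))"

definition jder0 :: "nat \<Rightarrow> nat \<Rightarrow> vec \<Rightarrow> vec" where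
  "jder0 k r = lin_ext (J0 k r)"

definition jder1 :: "nat \<Rightarrow> nat \<Rightarrow> vec \<Rightarrow> vec" where
  "jder1 k r = lin_ext (J1 k r)"

end

theory Submission imports Defs "Jordan_Normal_Form.Determinant" "HOL-Computational_Algebra.Polynomial" begin

definition ffp :: "nat \<Rightarrow> complex poly" where
  "ffp r = (\<Prod>i<r. [:- of_nat i, 1:])"

lemma ffp_Suc: "ffp (Suc r) = ffp r * [:- of_nat r, 1:]"
  unfolding ffp_def by (rule prod.lessThan_Suc)

lemma ffp_degree: "degree (ffp r) \<le> r"
proof (induction r)
  case 0 then show ?case by (simp add: ffp_def)
next
  case (Suc r)
  have "degree (ffp (Suc r)) \<le> degree (ffp r) + degree [:- of_nat r, 1 :: complex:]"
    unfolding ffp_Suc by (rule degree_mult_le)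
  then show ?case using Suc by simp
qed

lemma ffp_poly_nat: "poly (ffp r) (of_nat j) = coef_lower k r j"
proof (induction r)
  case 0 then show ?case by (simp add: ffp_def coef_lower_def)
next
  case (Suc r)
  have e: "poly (ffp (Suc r)) (of_nat j) = poly (ffp r) (of_nat j) * (of_nat j - of_nat r)"
    unfolding ffp_Suc poly_mult by simp
  show ?case
  proof (cases "Suc r \<le> j")
    case True
    have f: "fact (j - r) = (of_nat (j - r) :: complex) * fact (j - Suc r)"
      using True by (metis Suc_diff_Suc Suc_le_lessD fact_Suc of_nat_fact)
    have nz: "(of_nat (j-r)::complex) \<noteq> 0" using True by simp
    have "poly (ffp (Suc r)) (of_nat j) = fact j / fact (j-r) * of_nat (j-r)"
      using e Suc True by (simp add: coef_lower_def of_nat_diff)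
    also have "\<dots> = fact j / fact (j - Suc r)" unfolding f using nz by (simp add: field_simps)
    finally show ?thesis using True by (simp add: coef_lower_def)
  next
    case False
    then show ?thesis using e Suc by (auto simp: coef_lower_def)
  qed
qed

lemma ffp_poly_neg: "poly (ffp r) (- of_nat (w + j + 1)) = (-1)^r * fact (w + j + r) / fact (w + j)"
proof (induction r)
  case 0 then show ?case by (simp add: ffp_def)
next
  case (Suc r)
  have e: "poly (ffp (Suc r)) (- of_nat (w + j + 1)) = poly (ffp r) (- of_nat (w + j + 1)) * (- of_nat (w + j + 1) - of_nat r)"
    unfolding ffp_Suc poly_mult by simp
  have f: "fact (w + j + Suc r) = (of_nat (w+j+r+1) :: complex) * fact (w + j + r)"
    by (metis add_Suc_right fact_Suc of_nat_fact Suc_eq_plus1)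
  have "poly (ffp (Suc r)) (- of_nat (w + j + 1)) = (-1)^r * fact (w + j + r) / fact (w + j) * (- of_nat (w+j+r+1))"
    using e Suc by simp
  also have "\<dots> = (-1)^(Suc r) * fact (w + j + Suc r) / fact (w + j)" unfolding f by (simp add: field_simps)
  finally show ?case .
qed

lemma ffp_upper: "(-1)^(w+1) * poly (ffp r) (- of_nat (w + j + 1)) = coef_upper (r + w) r j"
  unfolding ffp_poly_neg coef_upper_def
  by (simp add: power_add algebra_simps)

lemma inj_sys:
  fixes a :: "nat \<Rightarrow> complex"
  assumes w: "w \<ge> 1" and sup: "\<forall>r. r > 2*m+1 \<longrightarrow> a r = 0"
  and hc: "\<forall>j\<le>m. (\<Sum>r\<le>2*m+1. a r * coef_lower (r+w) r j) = 0"
  and hb: "\<forall>j\<le>m. (\<Sum>r\<le>2*m+1. a r * coef_upper (r+w) r j) = 0"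
  shows "a r = 0"
proof -
  define N where "N = 2*m+1"
  define p where "p = (\<Sum>r\<le>N. smult (a r) (ffp r))"
  have fpn: "poly (ffp r) (of_nat j) = coef_lower (r+w) r j" for r j by (rule ffp_poly_nat)
  have pv: "poly p x = (\<Sum>r\<le>N. a r * poly (ffp r) x)" for x by (simp add: p_def poly_sum)
  have deg: "degree p \<le> N" unfolding p_def
  proof (rule degree_sum_le)
    fix r assume "r \<in> {..N}"
    then show "degree (smult (a r) (ffp r)) \<le> N"
      using ffp_degree[of r] degree_smult_le[of "a r" "ffp r"] by auto
  qed simp
  define A where "A = (of_nat ` {..m} \<union> (\<lambda>j. - of_nat (w+j+1)) ` {..m} :: complex set)"
  have c1: "card (of_nat ` {..m} :: complex set) = Suc m"
    by (subst card_image) (auto simp: inj_on_def)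
  have c2: "card ((\<lambda>j. - of_nat (w+j+1)) ` {..m} :: complex set) = Suc m"
    by (subst card_image) (auto simp: inj_on_def)
  have disj: "(of_nat ` {..m} :: complex set) \<inter> (\<lambda>j. - of_nat (w+j+1)) ` {..m} = {}"
  proof (rule ccontr)
    assume "\<not> ?thesis"
    then obtain i j :: nat where "(of_nat i :: complex) = - of_nat (w+j+1)" by auto
    then have "(of_nat i :: complex) + of_nat (w+j+1) = 0" by (simp add: algebra_simps)
    then have "(of_nat (i + (w+j+1)) :: complex) = 0" by (simp add: add_ac)
    then show False by (simp only: of_nat_eq_0_iff)
  qed
  have cA: "card A = 2*m+2" unfolding A_def
    by (subst card_Un_disjoint) (use c1 c2 disj in auto)
  have roots: "poly p x = poly 0 x" if "x \<in> A" for x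
  proof -
    from that consider (a) j where "j \<le> m" "x = of_nat j" | (b) j where "j \<le> m" "x = - of_nat (w+j+1)"
      unfolding A_def by auto
    then show ?thesis
    proof cases
      case a
      then show ?thesis using hc by (simp add: pv fpn N_def)
    next
      case b
      have "(-1)^(w+1) * poly p x = (\<Sum>r\<le>N. a r * ((-1)^(w+1) * poly (ffp r) x))"
        unfolding pv sum_distrib_left by (simp add: algebra_simps)
      also have "\<dots> = (\<Sum>r\<le>N. a r * coef_upper (r+w) r j)" unfolding b ffp_upper ..
      also have "\<dots> = 0" using hb b N_def by simp
      finally show ?thesis by simp
    qed
  qed
  have p0: "p = 0"
    by (rule poly_eqI_degree[OF roots]) (use cA deg N_def in auto)
  have hall: "(\<Sum>r\<le>N. a r * coef_lower (r+w) r j) = 0" for j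
    using pv[of "of_nat j"] p0 unfolding fpn by simp
  show ?thesis
  proof (induction r rule: less_induct)
    case (less j)
    show ?case
    proof (cases "j \<le> N")
      case False then show ?thesis using sup N_def by auto
    next
      case True
      have "(\<Sum>r\<le>N. a r * coef_lower (r+w) r j) = (\<Sum>r\<le>N. if r = j then a j * fact j else 0)"
      proof (rule sum.cong)
        fix r assume "r \<in> {..N}"
        show "a r * coef_lower (r+w) r j = (if r = j then a j * fact j else 0)"
          using less[of r] by (cases "r < j") (auto simp: coef_lower_def)
      qed simp
      also have "\<dots> = a j * fact j" using True by simp
      finally show ?thesis using hall[of j] by simp
    qed
  qed
qed

lemma ex_sys:
  fixes C B :: "nat \<Rightarrow> complex"
  assumes w: "w \<ge> 1"
  shows "\<exists>a. (\<forall>r. r > 2*m+1 \<longrightarrow> a r = 0) \<and>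
     (\<forall>j\<le>m. C j = (\<Sum>r\<le>2*m+1. a r * coef_lower (r+w) r j)) \<and>
     (\<forall>j\<le>m. B j = (\<Sum>r\<le>2*m+1. a r * coef_upper (r+w) r j))"
proof -
  define d where "d = 2*m+2"
  define M where "M k r = (if k \<le> m then coef_lower (r+w) r k else coef_upper (r+w) r (k - Suc m))" for k r
  define A where "A = mat d d (\<lambda>(k,r). M k r)"
  have Ac: "A \<in> carrier_mat d d" by (simp add: A_def)
  have dset: "{0..<d} = {..2*m+1}" unfolding d_def by auto
  have Av: "(A *\<^sub>v v) $ k = (\<Sum>r\<le>2*m+1. (if r < d then v $ r else 0) * M k r)"
    if "v \<in> carrier_vec d" "k < d" for v k
  proof -
    have "(A *\<^sub>v v) $ k = (\<Sum>r\<in>{0..<d}. M k r * v $ r)"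
      using that by (simp add: A_def scalar_prod_def)
    also have "\<dots> = (\<Sum>r\<le>2*m+1. (if r < d then v $ r else 0) * M k r)"
      unfolding dset[symmetric] by (rule sum.cong) auto
    finally show ?thesis .
  qed
  have det: "det A \<noteq> 0"
  proof
    assume "det A = 0"
    then obtain v where v: "v \<in> carrier_vec d" "v \<noteq> 0\<^sub>v d" "A *\<^sub>v v = 0\<^sub>v d"
      using det_0_iff_vec_prod_zero[OF Ac] by auto
    define a where "a r = (if r < d then v $ r else 0)" for r
    have a0: "\<forall>r. r > 2*m+1 \<longrightarrow> a r = 0" by (simp add: a_def d_def)
    have hc: "\<forall>j\<le>m. (\<Sum>r\<le>2*m+1. a r * coef_lower (r+w) r j) = 0"
    proof (intro allI impI)
      fix j assume j: "j \<le> m"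
      have "(A *\<^sub>v v) $ j = 0" using v j by (simp add: d_def)
      then show "(\<Sum>r\<le>2*m+1. a r * coef_lower (r+w) r j) = 0"
        using Av[OF v(1), of j] j by (simp add: a_def M_def d_def)
    qed
    have hb: "\<forall>j\<le>m. (\<Sum>r\<le>2*m+1. a r * coef_upper (r+w) r j) = 0"
    proof (intro allI impI)
      fix j assume j: "j \<le> m"
      have "(A *\<^sub>v v) $ (j + Suc m) = 0" using v j by (simp add: d_def)
      then show "(\<Sum>r\<le>2*m+1. a r * coef_upper (r+w) r j) = 0"
        using Av[OF v(1), of "j + Suc m"] j by (simp add: a_def M_def d_def)
    qed
    have "v = 0\<^sub>v d"
    proof (rule eq_vecI)
      fix i assume "i < dim_vec (0\<^sub>v d)"
      then have "i < d" by simp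
      then show "v $ i = 0\<^sub>v d $ i" using inj_sys[OF w a0 hc hb, of i] by (simp add: a_def)
    qed (use v in simp)
    with v show False by simp
  qed
  define y where "y = vec d (\<lambda>k. if k \<le> m then C k else B (k - Suc m))"
  have yc: "y \<in> carrier_vec d" by (simp add: y_def)
  define x where "x = (1 / det A) \<cdot>\<^sub>v (adj_mat A *\<^sub>v y)"
  have xc: "x \<in> carrier_vec d" using adj_mat(1)[OF Ac] yc by (simp add: x_def)
  have "A *\<^sub>v x = (1 / det A) \<cdot>\<^sub>v (A *\<^sub>v (adj_mat A *\<^sub>v y))"
    unfolding x_def by (rule mult_mat_vec[OF Ac]) (use adj_mat(1)[OF Ac] yc in simp)
  also have "A *\<^sub>v (adj_mat A *\<^sub>v y) = (A * adj_mat A) *\<^sub>v y"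
    using adj_mat(1)[OF Ac] Ac yc by simp
  also have "\<dots> = det A \<cdot>\<^sub>v y" unfolding adj_mat(2)[OF Ac] using yc by auto
  also have "(1 / det A) \<cdot>\<^sub>v (det A \<cdot>\<^sub>v y) = y" using det by (simp add: smult_smult_assoc)
  finally have Ax: "A *\<^sub>v x = y" .
  define a where "a r = (if r < d then x $ r else 0)" for r
  show ?thesis
  proof (intro exI conjI allI impI)
    fix r assume "r > 2*m+1" then show "a r = 0" by (simp add: a_def d_def)
  next
    fix j assume j: "j \<le> m"
    have "C j = (A *\<^sub>v x) $ j" using j by (simp add: Ax y_def d_def)
    also have "\<dots> = (\<Sum>r\<le>2*m+1. a r * coef_lower (r+w) r j)"
      using Av[OF xc, of j] j by (simp add: a_def M_def d_def)
    finally show "C j = (\<Sum>r\<le>2*m+1. a r * coef_lower (r+w) r j)" .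
  next
    fix j assume j: "j \<le> m"
    have "B j = (A *\<^sub>v x) $ (j + Suc m)" using j by (simp add: Ax y_def d_def)
    also have "\<dots> = (\<Sum>r\<le>2*m+1. a r * coef_upper (r+w) r j)"
      using Av[OF xc, of "j + Suc m"] j by (simp add: a_def M_def d_def)
    finally show "B j = (\<Sum>r\<le>2*m+1. a r * coef_upper (r+w) r j)" .
  qed
qed

lemma ex1_sys:
  fixes C B :: "nat \<Rightarrow> complex"
  assumes w: "w \<ge> 1"
  shows "\<exists>!a. (\<forall>r. r > 2*m+1 \<longrightarrow> a r = 0) \<and>
     (\<forall>j\<le>m. C j = (\<Sum>r\<le>2*m+1. a r * coef_lower (r+w) r j)) \<and>
     (\<forall>j\<le>m. B j = (\<Sum>r\<le>2*m+1. a r * coef_upper (r+w) r j))"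
proof (rule ex_ex1I)
  show "\<exists>a. (\<forall>r. r > 2*m+1 \<longrightarrow> a r = 0) \<and>
     (\<forall>j\<le>m. C j = (\<Sum>r\<le>2*m+1. a r * coef_lower (r+w) r j)) \<and>
     (\<forall>j\<le>m. B j = (\<Sum>r\<le>2*m+1. a r * coef_upper (r+w) r j))"
    by (rule ex_sys[OF w])
next
  fix a1 a2 :: "nat \<Rightarrow> complex"
  assume h1: "(\<forall>r. r > 2*m+1 \<longrightarrow> a1 r = 0) \<and>
     (\<forall>j\<le>m. C j = (\<Sum>r\<le>2*m+1. a1 r * coef_lower (r+w) r j)) \<and>
     (\<forall>j\<le>m. B j = (\<Sum>r\<le>2*m+1. a1 r * coef_upper (r+w) r j))"
  assume h2: "(\<forall>r. r > 2*m+1 \<longrightarrow> a2 r = 0) \<and>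
     (\<forall>j\<le>m. C j = (\<Sum>r\<le>2*m+1. a2 r * coef_lower (r+w) r j)) \<and>
     (\<forall>j\<le>m. B j = (\<Sum>r\<le>2*m+1. a2 r * coef_upper (r+w) r j))"
  define d where "d r = a1 r - a2 r" for r
  have s: "\<forall>r. r > 2*m+1 \<longrightarrow> d r = 0" using h1 h2 by (simp add: d_def)
  have c: "\<forall>j\<le>m. (\<Sum>r\<le>2*m+1. d r * coef_lower (r+w) r j) = 0"
    using h1 h2 by (simp add: d_def left_diff_distrib sum_subtractf)
  have b: "\<forall>j\<le>m. (\<Sum>r\<le>2*m+1. d r * coef_upper (r+w) r j) = 0"
    using h1 h2 by (simp add: d_def left_diff_distrib sum_subtractf)
  show "a1 = a2"
  proof
    fix r show "a1 r = a2 r" using inj_sys[OF w s c b, of r] by (simp add: d_def)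
  qed
qed

lemma Wsp_I: "finite S \<Longrightarrow> \<forall>x\<in>S. valid_idx n x \<Longrightarrow> {x. v x \<noteq> 0} \<subseteq> S \<Longrightarrow> v \<in> Wsp n"
  unfolding Wsp_def by (auto intro: finite_subset)

lemma phi_expand:
  assumes add: "\<forall>u\<in>Wsp n. \<forall>v\<in>Wsp n. phi (\<lambda>x. u x + v x) = (\<lambda>x. phi u x + phi v x)"
    and scale: "\<forall>c. \<forall>v\<in>Wsp n. phi (\<lambda>x. c * v x) = (\<lambda>x. c * phi v x)"
  shows "finite S \<Longrightarrow> \<forall>x\<in>S. valid_idx n x \<Longrightarrow> {x. v x \<noteq> 0} \<subseteq> S \<Longrightarrow>
     phi v = (\<lambda>y. \<Sum>x\<in>S. v x * phi (bas x) y)"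
proof (induction S arbitrary: v rule: finite_induct)
  case empty
  then have v: "v = (\<lambda>_. 0)" by auto
  have z: "(\<lambda>_. 0::complex) \<in> Wsp n" by (simp add: Wsp_def)
  have "phi (\<lambda>_. 0) = (\<lambda>_. 0)"
    using scale[rule_format, of "\<lambda>_. 0" 0, OF z] by simp
  then show ?case using v by simp
next
  case (insert s S)
  define v' where "v' = v(s := 0)"
  define u where "u = (\<lambda>y. v s * bas s y)"
  have bs: "bas s \<in> Wsp n" using insert.prems
    by (intro Wsp_I[of "{s}"]) (auto simp: bas_def)
  have v'W: "v' \<in> Wsp n" using insert
    by (intro Wsp_I[of S]) (auto simp: v'_def)
  have uW: "u \<in> Wsp n" using insert.prems
    by (intro Wsp_I[of "{s}"]) (auto simp: u_def bas_def)
  have vsum: "v = (\<lambda>y. v' y + u y)" by (auto simp: v'_def u_def bas_def)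
  have pu: "phi u = (\<lambda>y. v s * phi (bas s) y)" unfolding u_def using scale bs by blast
  have IH: "phi v' = (\<lambda>y. \<Sum>x\<in>S. v' x * phi (bas x) y)"
    using insert by (intro insert.IH) (auto simp: v'_def)
  have "phi v = (\<lambda>y. phi v' y + phi u y)" unfolding vsum using add v'W uW by blast
  also have "\<dots> = (\<lambda>y. (\<Sum>x\<in>S. v x * phi (bas x) y) + v s * phi (bas s) y)"
  proof
    fix y
    have "(\<Sum>x\<in>S. v' x * phi (bas x) y) = (\<Sum>x\<in>S. v x * phi (bas x) y)"
      using insert.hyps by (intro sum.cong) (auto simp: v'_def)
    then show "phi v' y + phi u y = (\<Sum>x\<in>S. v x * phi (bas x) y) + v s * phi (bas s) y"
      by (simp add: IH pu)
  qed
  also have "\<dots> = (\<lambda>y. \<Sum>x\<in>insert s S. v x * phi (bas x) y)"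
    using insert.hyps by (simp add: add.commute)
  finally show ?case .
qed

hide_type (open) Matrix.vec

theorem mainTheorem7:
  fixes n w m :: nat
    and phi :: "vec \<Rightarrow> vec"
    and lb mc lbeta mgamma :: "nat \<Rightarrow> complex"
  assumes n: "n \<ge> 1"
    and w: "w \<ge> 1"
    and phi_W: "\<forall>v\<in>Wsp n. phi v \<in> Wsp n"
    and phi_add: "\<forall>u\<in>Wsp n. \<forall>v\<in>Wsp n. phi (\<lambda>x. u x + v x) = (\<lambda>x. phi u x + phi v x)"
    and phi_scale: "\<forall>c. \<forall>v\<in>Wsp n. phi (\<lambda>x. c * v x) = (\<lambda>x. c * phi v x)"
    and phi_b: "\<forall>i j. 1 \<le> i \<and> i \<le> n \<longrightarrow> phi (bas (Gb, i, j)) = (\<lambda>x. lb j * bas (Gb, i, j + w) x)"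
    and phi_c: "\<forall>i j. 1 \<le> i \<and> i \<le> n \<longrightarrow> phi (bas (Gc, i, j)) = (\<lambda>x. mc j * bas (Gc, i, j + w) x)"
    and phi_beta: "\<forall>i j. 1 \<le> i \<and> i \<le> n \<longrightarrow> phi (bas (Gbeta, i, j)) = (\<lambda>x. lbeta j * bas (Gbeta, i, j + w) x)"
    and phi_gamma: "\<forall>i j. 1 \<le> i \<and> i \<le> n \<longrightarrow> phi (bas (Ggamma, i, j)) = (\<lambda>x. mgamma j * bas (Ggamma, i, j + w) x)"
  shows "\<exists>!a :: (nat \<Rightarrow> complex) \<times> (nat \<Rightarrow> complex).
           (\<forall>r. r > 2 * m + 1 \<longrightarrow> fst a r = 0 \<and> snd a r = 0) \<and>
           (\<forall>v\<in>Wm n m. phi v = (\<lambda>x. \<Sum>r\<le>2 * m + 1.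
                fst a r * jder0 (r + w) r v x + snd a r * jder1 (r + w) r v x))"
proof -
  define N where "N = 2*m+1"
  define T where "T a x y = (\<Sum>r\<le>2*m+1. fst a r * J0 (r+w) r x y + snd a r * J1 (r+w) r x y)"
    for a :: "(nat \<Rightarrow> complex) \<times> (nat \<Rightarrow> complex)" and x y
  define P where "P a = (\<forall>v\<in>Wm n m. phi v = (\<lambda>x. \<Sum>r\<le>2 * m + 1.
                fst a r * jder0 (r + w) r v x + snd a r * jder1 (r + w) r v x))"
    for a :: "(nat \<Rightarrow> complex) \<times> (nat \<Rightarrow> complex)"
  define Bc where "Bc a = (\<forall>x. valid_idx n x \<and> snd (snd x) \<le> m \<longrightarrow> phi (bas x) = T a x)"
    for a :: "(nat \<Rightarrow> complex) \<times> (nat \<Rightarrow> complex)"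
  define Q where "Q C B f = ((\<forall>j\<le>m. C j = (\<Sum>r\<le>2*m+1. f r * coef_lower (r+w) r j)) \<and>
     (\<forall>j\<le>m. B j = (\<Sum>r\<le>2*m+1. f r * coef_upper (r+w) r j)))" for C B f
  have supb: "{y. bas x y \<noteq> 0} = {x}" for x by (auto simp: bas_def)
  have jb0: "jder0 k r (bas x) = J0 k r x" for k r x
    unfolding jder0_def lin_ext_def supb by (simp add: bas_def)
  have jb1: "jder1 k r (bas x) = J1 k r x" for k r x
    unfolding jder1_def lin_ext_def supb by (simp add: bas_def)
  have bWm: "bas x \<in> Wm n m" if "valid_idx n x" "snd (snd x) \<le> m" for x
  proof -
    have "bas x \<in> Wsp n" using that by (intro Wsp_I[of "{x}"]) (auto simp: bas_def)
    then show ?thesis using that unfolding Wm_def by (auto simp: bas_def)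
  qed
  have rhs_exp: "(\<lambda>y. \<Sum>r\<le>2 * m + 1. fst a r * jder0 (r + w) r v y + snd a r * jder1 (r + w) r v y)
      = (\<lambda>y. \<Sum>x\<in>{x. v x \<noteq> 0}. v x * T a x y)" for a v
  proof
    fix y
    have "(\<Sum>r\<le>2 * m + 1. fst a r * jder0 (r + w) r v y + snd a r * jder1 (r + w) r v y)
      = (\<Sum>r\<le>2 * m + 1. \<Sum>x\<in>{x. v x \<noteq> 0}. v x * (fst a r * J0 (r+w) r x y + snd a r * J1 (r+w) r x y))"
      unfolding jder0_def jder1_def lin_ext_def
      by (simp add: sum_distrib_left sum.distrib[symmetric] algebra_simps)
    also have "\<dots> = (\<Sum>x\<in>{x. v x \<noteq> 0}. \<Sum>r\<le>2 * m + 1. v x * (fst a r * J0 (r+w) r x y + snd a r * J1 (r+w) r x y))"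
      by (rule sum.swap)
    also have "\<dots> = (\<Sum>x\<in>{x. v x \<noteq> 0}. v x * T a x y)"
      by (simp only: T_def sum_distrib_left)
    finally show "(\<Sum>r\<le>2 * m + 1. fst a r * jder0 (r + w) r v y + snd a r * jder1 (r + w) r v y)
      = (\<Sum>x\<in>{x. v x \<noteq> 0}. v x * T a x y)" .
  qed
  have PB: "P a \<longleftrightarrow> Bc a" for a
  proof
    assume Pa: "P a"
    show "Bc a" unfolding Bc_def
    proof (intro allI impI)
      fix x assume x: "valid_idx n x \<and> snd (snd x) \<le> m"
      have "phi (bas x) = (\<lambda>y. \<Sum>r\<le>2 * m + 1. fst a r * jder0 (r + w) r (bas x) y + snd a r * jder1 (r + w) r (bas x) y)"
        using Pa bWm x unfolding P_def by blast
      then show "phi (bas x) = T a x" unfolding jb0 jb1 T_def by (simp add: fun_eq_iff)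
    qed
  next
    assume Ba: "Bc a"
    show "P a" unfolding P_def
    proof
      fix v assume v: "v \<in> Wm n m"
      then have vW: "v \<in> Wsp n" unfolding Wm_def by simp
      have fin: "finite {x. v x \<noteq> 0}" and val: "\<forall>x\<in>{x. v x \<noteq> 0}. valid_idx n x"
        using vW unfolding Wsp_def by auto
      have "phi v = (\<lambda>y. \<Sum>x\<in>{x. v x \<noteq> 0}. v x * phi (bas x) y)"
        by (rule phi_expand[OF phi_add phi_scale fin val]) simp
      also have "\<dots> = (\<lambda>y. \<Sum>x\<in>{x. v x \<noteq> 0}. v x * T a x y)"
      proof
        fix y show "(\<Sum>x\<in>{x. v x \<noteq> 0}. v x * phi (bas x) y) = (\<Sum>x\<in>{x. v x \<noteq> 0}. v x * T a x y)"
        proof (rule sum.cong)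
          fix x assume xs: "x \<in> {x. v x \<noteq> 0}"
          obtain g i j where xe: "x = (g, i, j)" by (cases x) auto
          have "j \<le> m" using v xs xe unfolding Wm_def by auto
          then have "phi (bas x) = T a x" using Ba val xs xe unfolding Bc_def by auto
          then show "v x * phi (bas x) y = v x * T a x y" by simp
        qed simp
      qed
      finally show "phi v = (\<lambda>x. \<Sum>r\<le>2 * m + 1. fst a r * jder0 (r + w) r v x + snd a r * jder1 (r + w) r v x)"
        unfolding rhs_exp .
    qed
  qed
  have Tc: "T a (Gc, i, j) = (\<lambda>y. (\<Sum>r\<le>2*m+1. fst a r * coef_lower (r+w) r j) * bas (Gc, i, j + w) y)" for a i j
    unfolding T_def J0_def J1_def by (simp add: sum_distrib_right fun_eq_iff mult.assoc distrib_right)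
  have Tb: "T a (Gb, i, j) = (\<lambda>y. (\<Sum>r\<le>2*m+1. fst a r * coef_upper (r+w) r j) * bas (Gb, i, j + w) y)" for a i j
    unfolding T_def J0_def J1_def by (simp add: sum_distrib_right fun_eq_iff add.commute mult.assoc distrib_right)
  have Tg: "T a (Ggamma, i, j) = (\<lambda>y. (\<Sum>r\<le>2*m+1. snd a r * coef_lower (r+w) r j) * bas (Ggamma, i, j + w) y)" for a i j
    unfolding T_def J0_def J1_def by (simp add: sum_distrib_right fun_eq_iff mult.assoc distrib_right)
  have Tbe: "T a (Gbeta, i, j) = (\<lambda>y. (\<Sum>r\<le>2*m+1. snd a r * coef_upper (r+w) r j) * bas (Gbeta, i, j + w) y)" for a i j
    unfolding T_def J0_def J1_def by (simp add: sum_distrib_right fun_eq_iff add.commute mult.assoc distrib_right)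
  have feq: "((\<lambda>y. c1 * bas X y) = (\<lambda>y. c2 * bas X y)) \<longleftrightarrow> c1 = c2" for c1 c2 :: complex and X
  proof
    assume "(\<lambda>y. c1 * bas X y) = (\<lambda>y. c2 * bas X y)"
    from fun_cong[OF this, of X] show "c1 = c2" by (simp add: bas_def)
  qed simp
  have v1: "valid_idx n (g, 1, j)" for g j using n by (simp add: valid_idx_def)
  have BQ: "Bc a \<longleftrightarrow> Q mc lb (fst a) \<and> Q mgamma lbeta (snd a)" for a
  proof
    assume Ba: "Bc a"
    have e: "phi (bas (g, 1, j)) = T a (g, 1, j)" if "j \<le> m" for g j
      using Ba v1 that unfolding Bc_def by auto
    show "Q mc lb (fst a) \<and> Q mgamma lbeta (snd a)" unfolding Q_def
    proof (intro conjI allI impI)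
      fix j assume j: "j \<le> m"
      show "mc j = (\<Sum>r\<le>2*m+1. fst a r * coef_lower (r+w) r j)"
      proof -
        have p: "phi (bas (Gc, 1, j)) = (\<lambda>y. mc j * bas (Gc, 1, j + w) y)" using phi_c n by simp
        from e[OF j, of Gc, unfolded Tc p] show ?thesis unfolding feq .
      qed
      show "lb j = (\<Sum>r\<le>2*m+1. fst a r * coef_upper (r+w) r j)"
      proof -
        have p: "phi (bas (Gb, 1, j)) = (\<lambda>y. lb j * bas (Gb, 1, j + w) y)" using phi_b n by simp
        from e[OF j, of Gb, unfolded Tb p] show ?thesis unfolding feq .
      qed
      show "mgamma j = (\<Sum>r\<le>2*m+1. snd a r * coef_lower (r+w) r j)"
      proof -
        have p: "phi (bas (Ggamma, 1, j)) = (\<lambda>y. mgamma j * bas (Ggamma, 1, j + w) y)" using phi_gamma n by simp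
        from e[OF j, of Ggamma, unfolded Tg p] show ?thesis unfolding feq .
      qed
      show "lbeta j = (\<Sum>r\<le>2*m+1. snd a r * coef_upper (r+w) r j)"
      proof -
        have p: "phi (bas (Gbeta, 1, j)) = (\<lambda>y. lbeta j * bas (Gbeta, 1, j + w) y)" using phi_beta n by simp
        from e[OF j, of Gbeta, unfolded Tbe p] show ?thesis unfolding feq .
      qed
    qed
  next
    assume q: "Q mc lb (fst a) \<and> Q mgamma lbeta (snd a)"
    show "Bc a" unfolding Bc_def
    proof (intro allI impI)
      fix x assume x: "valid_idx n x \<and> snd (snd x) \<le> m"
      obtain g i j where xe: "x = (g, i, j)" by (cases x) auto
      have i: "1 \<le> i \<and> i \<le> n" and j: "j \<le> m" using x xe by (auto simp: valid_idx_def)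
      show "phi (bas x) = T a x"
      proof (cases g)
        case Gb
        have "phi (bas x) = (\<lambda>y. lb j * bas (Gb, i, j + w) y)" using phi_b i by (simp add: xe Gb)
        also have "(\<lambda>y. lb j * bas (Gb, i, j + w) y) = T a x" unfolding xe Gb Tb feq by (rule conjunct2[OF conjunct1[OF q[unfolded Q_def]], rule_format, OF j])
        finally show ?thesis .
      next
        case Gc
        have "phi (bas x) = (\<lambda>y. mc j * bas (Gc, i, j + w) y)" using phi_c i by (simp add: xe Gc)
        also have "(\<lambda>y. mc j * bas (Gc, i, j + w) y) = T a x" unfolding xe Gc Tc feq by (rule conjunct1[OF conjunct1[OF q[unfolded Q_def]], rule_format, OF j])
        finally show ?thesis .
      next
        case Gbeta
        have "phi (bas x) = (\<lambda>y. lbeta j * bas (Gbeta, i, j + w) y)" using phi_beta i by (simp add: xe Gbeta)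
        also have "(\<lambda>y. lbeta j * bas (Gbeta, i, j + w) y) = T a x" unfolding xe Gbeta Tbe feq by (rule conjunct2[OF conjunct2[OF q[unfolded Q_def]], rule_format, OF j])
        finally show ?thesis .
      next
        case Ggamma
        have "phi (bas x) = (\<lambda>y. mgamma j * bas (Ggamma, i, j + w) y)" using phi_gamma i by (simp add: xe Ggamma)
        also have "(\<lambda>y. mgamma j * bas (Ggamma, i, j + w) y) = T a x" unfolding xe Ggamma Tg feq by (rule conjunct1[OF conjunct2[OF q[unfolded Q_def]], rule_format, OF j])
        finally show ?thesis .
      qed
    qed
  qed
  have ef: "\<exists>!f. (\<forall>r. r > 2*m+1 \<longrightarrow> f r = 0) \<and> Q mc lb f"
    unfolding Q_def by (rule ex1_sys[OF w])
  obtain f where f: "(\<forall>r. r > 2*m+1 \<longrightarrow> f r = 0) \<and> Q mc lb f"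
    and fu0: "\<forall>f'. (\<forall>r. r > 2*m+1 \<longrightarrow> f' r = 0) \<and> Q mc lb f' \<longrightarrow> f' = f"
    using ef by (rule ex1E)
  note fu = fu0[rule_format]
  have eg: "\<exists>!g. (\<forall>r. r > 2*m+1 \<longrightarrow> g r = 0) \<and> Q mgamma lbeta g"
    unfolding Q_def by (rule ex1_sys[OF w])
  obtain g where g: "(\<forall>r. r > 2*m+1 \<longrightarrow> g r = 0) \<and> Q mgamma lbeta g"
    and gu0: "\<forall>g'. (\<forall>r. r > 2*m+1 \<longrightarrow> g' r = 0) \<and> Q mgamma lbeta g' \<longrightarrow> g' = g"
    using eg by (rule ex1E)
  note gu = gu0[rule_format]
  have main: "(\<forall>r. r > 2 * m + 1 \<longrightarrow> fst a r = 0 \<and> snd a r = 0) \<and> P a \<longleftrightarrow>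
     ((\<forall>r. r > 2*m+1 \<longrightarrow> fst a r = 0) \<and> Q mc lb (fst a)) \<and>
     ((\<forall>r. r > 2*m+1 \<longrightarrow> snd a r = 0) \<and> Q mgamma lbeta (snd a))" for a
    unfolding PB BQ by auto
  show ?thesis
    unfolding P_def[symmetric]
  proof (rule ex1I[of _ "(f, g)"])
    show "(\<forall>r. r > 2 * m + 1 \<longrightarrow> fst (f, g) r = 0 \<and> snd (f, g) r = 0) \<and> P (f, g)"
      unfolding main using f g by simp
  next
    fix a assume "(\<forall>r. r > 2 * m + 1 \<longrightarrow> fst a r = 0 \<and> snd a r = 0) \<and> P a"
    then have h: "((\<forall>r. r > 2*m+1 \<longrightarrow> fst a r = 0) \<and> Q mc lb (fst a)) \<and>
     ((\<forall>r. r > 2*m+1 \<longrightarrow> snd a r = 0) \<and> Q mgamma lbeta (snd a))" unfolding main .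
    show "a = (f, g)" using fu[of "fst a"] gu[of "snd a"] h by (simp add: prod_eq_iff)
  qed
qed

end
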